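(* Let $c$ be a twisted cap-cup cycle with $T(c) = \pm 2$. Then there exists an unknot diagram $g \in \mathbb{CC}$ such that $W(g) = W(c)$ and $\mathrm{ccc}(g) = U(c)$.
   Context: $\mathbb{CC}$ is the free (strict) braided monoidal category generated by objects $\uparrow, \downarrow$ and four generating morphisms, with no equations imposed between them: caps $\mathrm{cap}_r : I \to \uparrow \otimes \downarrow$, $\mathrm{cap}_l : I \to \downarrow \otimes \uparrow$ and cups $\mathrm{cup}_r : \downarrow \otimes \uparrow \to I$, $\mathrm{cup}_l : \uparrow \otimes \downarrow \to I$. Wires are oriented according to their labels. A knot (diagram) in $\mathbb{CC}$ is a morphism $I \to I$ whose string diagram has a single connected component; it is an unknot diagram if the knot it depicts (interpreting caps and cups as arcs) is isotopic to the unknot in the usual (general) sense. The writhe $W(g)$ of a diagram is the sum of the signs of its crossings (the braiding $\sigma$ between equally oriented strands counts $+1$, $\sigma^{-1}$ counts $-1$, i.e.\ the standard sign of oriented crossings). The turning numbers of the generators are $t(\mathrm{cap}_r) = +1$, $t(\mathrm{cap}_l) = -1$, $t(\mathrm{cup}_r) = -1$, $t(\mathrm{cup}_l) = +1$. A cap-cup cycle is a finite sequence of elements of $\{\mathrm{cap}_l, \mathrm{cap}_r, \mathrm{cup}_l, \mathrm{cup}_r\}$ up to cyclic permutation in which caps and cups alternate. For a knot $g$, $\mathrm{ccc}(g)$ is the cap-cup cycle recorded by following the strand along its orientation once around. A twisted cap-cup is an element $(x, w)$ of $\{\mathrm{cap}_l, \mathrm{cap}_r, \mathrm{cup}_l,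 \mathrm{cup}_r\} \times \mathbb{Z}$ (thought of as the cap/cup $x$ composed with braidings of total writhe $w$); its turning number is $T((x,w)) = (-1)^{|w|} t(x)$ and its writhe is $W((x,w)) = w$. A twisted cap-cup cycle is a finite sequence of twisted cap-cups up to cyclic permutation in which caps and cups alternate; its turning number $T(c)$ and writhe $W(c)$ are the sums of those of its elements, and $U(c)$ is the cap-cup cycle obtained by forgetting the integer component of each element. *)

theory Defs
  imports Main
begin

text \<open>Orientations of wires: True = up arrow, False = down arrow.
  A diagram is a list of slices read from bottom (domain) to top (codomain).
  Each slice is a single generator tensored with identities: a cap/cup at
  position k, or an elementary braiding between the wires at positions k and k+1
  (Cross True k = sigma, Cross False k = sigma inverse), for any orientations.\<close>

datatype gen = CapR | CapL | CupR | CupL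

datatype slice = Gen gen nat | Cross bool nat

fun is_cap :: "gen \<Rightarrow> bool" where
  "is_cap CapR = True" | "is_cap CapL = True" | "is_cap CupR = False" | "is_cap CupL = False"

fun flip_gen :: "gen \<Rightarrow> gen" where
  "flip_gen CapR = CapL" | "flip_gen CapL = CapR" | "flip_gen CupR = CupL" | "flip_gen CupL = CupR"

fun turn :: "gen \<Rightarrow> int" where
  "turn CapR = 1" | "turn CapL = -1" | "turn CupR = -1" | "turn CupL = 1"

fun pos :: "slice \<Rightarrow> nat" where
  "pos (Gen g k) = k" | "pos (Cross b k) = k"

fun setpos :: "nat \<Rightarrow> slice \<Rightarrow> slice" where
  "setpos n (Gen g k) = Gen g n" | "setpos n (Cross b k) = Cross b n"

fun inw :: "slice \<Rightarrow> nat" where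
  "inw (Gen g k) = (if is_cap g then 0 else 2)" | "inw (Cross b k) = 2"

fun outw :: "slice \<Rightarrow> nat" where
  "outw (Gen g k) = (if is_cap g then 2 else 0)" | "outw (Cross b k) = 2"

fun step :: "slice \<Rightarrow> bool list \<Rightarrow> bool list option" where
  "step (Gen CapR k) w = (if k \<le> length w then Some (take k w @ [True, False] @ drop k w) else None)"
| "step (Gen CapL k) w = (if k \<le> length w then Some (take k w @ [False, True] @ drop k w) else None)"
| "step (Gen CupR k) w = (if Suc k < length w \<and> w ! k = False \<and> w ! Suc k = True
       then Some (take k w @ drop (k + 2) w) else None)"
| "step (Gen CupL k) w = (if Suc k < length w \<and> w ! k = True \<and> w ! Suc k = False
       then Some (take k w @ drop (k + 2) w) else None)"
| "step (Cross b k) w = (if Suc k < length w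
       then Some (take k w @ [w ! Suc k, w ! k] @ drop (k + 2) w) else None)"

fun run :: "slice list \<Rightarrow> bool list \<Rightarrow> bool list option" where
  "run [] w = Some w"
| "run (s # ss) w = (case step s w of None \<Rightarrow> None | Some w' \<Rightarrow> run ss w')"

definition closed :: "slice list \<Rightarrow> bool" where
  "closed d \<longleftrightarrow> run d [] = Some []"

definition lvl :: "slice list \<Rightarrow> nat \<Rightarrow> bool list" where
  "lvl d i = the (run (take i d) [])"

definition points :: "slice list \<Rightarrow> (nat \<times> nat) set" where
  "points d = {(i, j). i \<le> length d \<and> j < length (lvl d i)}"

text \<open>Following the strand along its orientation: the next boundary point.\<close>
definition nxt :: "slice list \<Rightarrow> nat \<times> nat \<Rightarrow> nat \<times> nat" where
  "nxt d p = (case p of (i, j) \<Rightarrow>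
     (if lvl d i ! j then
        (case d ! i of
           Cross b k \<Rightarrow> (Suc i, if j = k then Suc k else if j = Suc k then k else j)
         | Gen g k \<Rightarrow>
             (if is_cap g then (Suc i, if j < k then j else j + 2)
              else if j < k then (Suc i, j) else if j = k then (i, Suc k)
              else if j = Suc k then (i, k) else (Suc i, j - 2)))
      else
        (case d ! (i - 1) of
           Cross b k \<Rightarrow> (i - 1, if j = k then Suc k else if j = Suc k then k else j)
         | Gen g k \<Rightarrow>
             (if is_cap g then
                (if j < k then (i - 1, j) else if j = k then (i, Suc k)
                 else if j = Suc k then (i, k) else (i - 1, j - 2))
              else (i - 1, if j < k then j else j + 2)))))"

text \<open>The cap or cup passed (turned around) when leaving point p along the orientation.\<close>
definition ev :: "slice list \<Rightarrow> nat \<times> nat \<Rightarrow> gen option" where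
  "ev d p = (case p of (i, j) \<Rightarrow>
     (if lvl d i ! j then
        (case d ! i of Gen g k \<Rightarrow> if \<not> is_cap g \<and> (j = k \<or> j = Suc k) then Some g else None
                     | Cross b k \<Rightarrow> None)
      else
        (case d ! (i - 1) of Gen g k \<Rightarrow> if is_cap g \<and> (j = k \<or> j = Suc k) then Some g else None
                           | Cross b k \<Rightarrow> None)))"

definition knot :: "slice list \<Rightarrow> bool" where
  "knot d \<longleftrightarrow> closed d \<and> points d \<noteq> {} \<and>
     (\<forall>p \<in> points d. \<forall>q \<in> points d. \<exists>m. (nxt d ^^ m) p = q)"

text \<open>Cap-cup cycle read once around the knot starting at point p (as a list;
  cap-cup cycles are lists up to cyclic permutation).\<close>
definition ccc_from :: "slice list \<Rightarrow> nat \<times> nat \<Rightarrow> gen list" where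
  "ccc_from d p = concat (map (\<lambda>m. case ev d ((nxt d ^^ m) p) of None \<Rightarrow> [] | Some g \<Rightarrow> [g])
                              [0..<card (points d)])"

definition cyc_eq :: "'a list \<Rightarrow> 'a list \<Rightarrow> bool" where
  "cyc_eq xs ys \<longleftrightarrow> (\<exists>n. rotate n xs = ys)"

definition writhe :: "slice list \<Rightarrow> int" where
  "writhe d = (\<Sum>i<length d. case d ! i of
       Gen g k \<Rightarrow> 0
     | Cross b k \<Rightarrow> (if b then 1 else -1) *
                    (if lvl d i ! k = lvl d i ! Suc k then 1 else -1))"

inductive dmove :: "slice list \<Rightarrow> slice list \<Rightarrow> bool" where
  exch_l: "pos t + inw t \<le> pos s \<Longrightarrow>
     dmove (d1 @ [s, t] @ d2) (d1 @ [t, setpos (pos s + outw t - inw t) s] @ d2)"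
| exch_r: "pos s + outw s \<le> pos t \<Longrightarrow>
     dmove (d1 @ [s, t] @ d2) (d1 @ [setpos (pos t + inw s - outw s) t, s] @ d2)"
| r2: "dmove (d1 @ [Cross b k, Cross (\<not> b) k] @ d2) (d1 @ d2)"
| r3: "dmove (d1 @ [Cross b k, Cross b (Suc k), Cross b k] @ d2)
             (d1 @ [Cross b (Suc k), Cross b k, Cross b (Suc k)] @ d2)"
| nat_cap1: "is_cap g \<Longrightarrow>
     dmove (d1 @ [Gen g (Suc k), Cross b k, Cross b (Suc k)] @ d2) (d1 @ [Gen g k] @ d2)"
| nat_cap2: "is_cap g \<Longrightarrow>
     dmove (d1 @ [Gen g k, Cross b (Suc k), Cross b k] @ d2) (d1 @ [Gen g (Suc k)] @ d2)"
| nat_cup1: "\<not> is_cap g \<Longrightarrow>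
     dmove (d1 @ [Cross b k, Cross b (Suc k), Gen g k] @ d2) (d1 @ [Gen g (Suc k)] @ d2)"
| nat_cup2: "\<not> is_cap g \<Longrightarrow>
     dmove (d1 @ [Cross b (Suc k), Cross b k, Gen g (Suc k)] @ d2) (d1 @ [Gen g k] @ d2)"
| zig1: "is_cap g \<Longrightarrow> \<not> is_cap h \<Longrightarrow> dmove (d1 @ [Gen g k, Gen h (Suc k)] @ d2) (d1 @ d2)"
| zig2: "is_cap g \<Longrightarrow> \<not> is_cap h \<Longrightarrow> dmove (d1 @ [Gen g (Suc k), Gen h k] @ d2) (d1 @ d2)"
| twist_cap: "is_cap g \<Longrightarrow> dmove (d1 @ [Gen g k, Cross b k] @ d2) (d1 @ [Gen (flip_gen g) k] @ d2)"
| twist_cup: "\<not> is_cap g \<Longrightarrow> dmove (d1 @ [Cross b k, Gen g k] @ d2) (d1 @ [Gen (flip_gen g) k] @ d2)"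

definition isotopic :: "slice list \<Rightarrow> slice list \<Rightarrow> bool" where
  "isotopic = equivclp (\<lambda>d e. closed d \<and> closed e \<and> dmove d e)"

definition unknot_diagram :: "slice list \<Rightarrow> bool" where
  "unknot_diagram d \<longleftrightarrow> knot d \<and> isotopic d [Gen CapR 0, Gen CupL 0]"

text \<open>A twisted cap-cup cycle is a list of twisted cap-cups up to cyclic permutation,
  with caps and cups alternating cyclically.\<close>
definition alternating :: "(gen \<times> int) list \<Rightarrow> bool" where
  "alternating c \<longleftrightarrow> (\<forall>i < length c.
     is_cap (fst (c ! i)) \<noteq> is_cap (fst (c ! (Suc i mod length c))))"

definition tT :: "(gen \<times> int) list \<Rightarrow> int" where
  "tT c = (\<Sum>x\<leftarrow>c. (-1) ^ nat \<bar>snd x\<bar> * turn (fst x))"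

definition tW :: "(gen \<times> int) list \<Rightarrow> int" where
  "tW c = (\<Sum>x\<leftarrow>c. snd x)"

definition U :: "(gen \<times> int) list \<Rightarrow> gen list" where
  "U c = map fst c"

end

theory Submission
  imports Defs
begin

lemma run_append: "run (xs @ ys) w = (case run xs w of None \<Rightarrow> None | Some w' \<Rightarrow> run ys w')"
  by (induction xs arbitrary: w) (auto split: option.splits)

fun walk :: "('a \<Rightarrow> 'a) \<Rightarrow> 'a \<Rightarrow> 'a list \<Rightarrow> 'a \<Rightarrow> bool" where
  "walk f p [] q = (p = q)"
| "walk f p (x # xs) q = (p = x \<and> walk f (f x) xs q)"

lemma walk_append: "walk f p xs q \<Longrightarrow> walk f q ys r \<Longrightarrow> walk f p (xs @ ys) r"
  by (induction xs arbitrary: p) auto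

lemma walk_nth: "walk f p xs q \<Longrightarrow> (\<forall>k<length xs. xs ! k = (f ^^ k) p) \<and> (f ^^ length xs) p = q"
proof (induction xs arbitrary: p)
  case Nil then show ?case by simp
next
  case (Cons x xs)
  then have px: "p = x" and w: "walk f (f x) xs q" by auto
  from Cons.IH[OF w] have ih: "\<forall>k<length xs. xs ! k = (f ^^ k) (f x)" "(f ^^ length xs) (f x) = q" by auto
  show ?case
  proof (intro conjI allI impI)
    fix k assume "k < length (x # xs)"
    then show "(x # xs) ! k = (f ^^ k) p"
      using ih px by (cases k) (auto simp: funpow_swap1)
  next
    show "(f ^^ length (x # xs)) p = q" using ih px by (simp add: funpow_swap1)
  qed
qed

lemma walk_map: "walk f p xs q \<Longrightarrow> xs = map (\<lambda>k. (f ^^ k) p) [0..<length xs]"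
  using walk_nth[of f p xs q] by (intro nth_equalityI) auto

definition shp :: "nat \<Rightarrow> nat \<times> nat \<Rightarrow> nat \<times> nat" where
  "shp n p = (n + fst p, snd p)"

definition sh :: "nat \<Rightarrow> (nat \<times> nat) list \<Rightarrow> (nat \<times> nat) list" where
  "sh n = map (shp n)"

lemma sh_sh: "sh a (sh b xs) = sh (a + b) xs"
  by (simp add: sh_def shp_def add.assoc)

lemma sh_append: "sh n (xs @ ys) = sh n xs @ sh n ys"
  by (simp add: sh_def)

lemma set_sh: "set (sh n xs) = shp n ` set xs"
  by (simp add: sh_def)

lemma inj_shp: "inj (shp n)"
  by (auto simp: inj_def shp_def prod_eq_iff)

lemma distinct_sh: "distinct (sh n xs) = distinct xs"
  by (simp add: sh_def distinct_map inj_on_def shp_def prod_eq_iff)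

definition evl :: "gen option \<Rightarrow> gen list" where
  "evl x = (case x of None \<Rightarrow> [] | Some g \<Rightarrow> [g])"

definition lvlw :: "bool list \<Rightarrow> slice list \<Rightarrow> nat \<Rightarrow> bool list" where
  "lvlw w d i = the (run (take i d) w)"

definition ptsw :: "bool list \<Rightarrow> slice list \<Rightarrow> (nat \<times> nat) set" where
  "ptsw w d = {(i, j). i \<le> length d \<and> j < length (lvlw w d i)}"

lemma ptsw_eq: "ptsw w d = (\<Union>t\<in>{..length d}. (\<lambda>j. (t, j)) ` {..<length (lvlw w d t)})"
  unfolding ptsw_def by auto

lemma lvl_lvlw: "lvl d = lvlw [] d"
  by (simp add: fun_eq_iff lvl_def lvlw_def)

lemma points_ptsw: "points d = ptsw [] d"
  by (simp add: points_def ptsw_def lvl_lvlw)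

lemma lvlw_app1: "i \<le> length A \<Longrightarrow> lvlw w (A @ B) i = lvlw w A i"
  by (simp add: lvlw_def)

lemma lvlw_app2: "run A w = Some w' \<Longrightarrow> lvlw w (A @ B) (length A + i) = lvlw w' B i"
  by (simp add: lvlw_def run_append)

lemma lvlw_0: "lvlw w M 0 = w"
  by (simp add: lvlw_def)

lemma lvlw_end: "run M w = Some w' \<Longrightarrow> lvlw w M (length M) = w'"
  by (simp add: lvlw_def)

lemma ptsw_append:
  assumes "run A w = Some w'"
  shows "ptsw w (A @ B) = ptsw w A \<union> shp (length A) ` ptsw w' B"
proof (intro set_eqI iffI)
  fix x assume x: "x \<in> ptsw w (A @ B)"
  obtain i j where xij: "x = (i, j)" by force
  show "x \<in> ptsw w A \<union> shp (length A) ` ptsw w' B"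
  proof (cases "i \<le> length A")
    case True
    then show ?thesis using x xij lvlw_app1[OF True, of w B] by (auto simp: ptsw_def)
  next
    case False
    then obtain t where t: "i = length A + t" by (metis le_add_diff_inverse nat_le_linear)
    have "(t, j) \<in> ptsw w' B" using x xij t lvlw_app2[OF assms, of B t] by (auto simp: ptsw_def)
    then have "shp (length A) (t, j) \<in> shp (length A) ` ptsw w' B" by blast
    then show ?thesis using xij t by (simp add: shp_def)
  qed
next
  fix x assume x: "x \<in> ptsw w A \<union> shp (length A) ` ptsw w' B"
  then show "x \<in> ptsw w (A @ B)"
  proof
    assume "x \<in> ptsw w A"
    then show ?thesis using lvlw_app1[of _ A w B] by (auto simp: ptsw_def)
  next
    assume "x \<in> shp (length A) ` ptsw w' B"
    then obtain t j where "x = (length A + t, j)" "(t, j) \<in> ptsw w' B" by (auto simp: shp_def)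
    then show ?thesis using lvlw_app2[OF assms, of B t] by (auto simp: ptsw_def)
  qed
qed

lemma ptsw_level0: "(0, j) \<in> ptsw w M \<longleftrightarrow> j < length w"
  by (simp add: ptsw_def lvlw_0)

lemma ptsw_levelend: "run M w = Some w' \<Longrightarrow> (length M, j) \<in> ptsw w M \<longleftrightarrow> j < length w'"
  by (simp add: ptsw_def lvlw_end)

lemma ptsw_le: "(i, j) \<in> ptsw w M \<Longrightarrow> i \<le> length M"
  by (simp add: ptsw_def)

definition Gm :: "slice list \<Rightarrow> (nat \<times> nat) list \<Rightarrow> (nat \<times> nat) list \<Rightarrow> gen list \<Rightarrow> bool" where
  "Gm M Ub Db E \<longleftrightarrow> run M [True, False] = Some [True, False] \<and> distinct (Ub @ Db) \<and>
     set (Ub @ Db) = ptsw [True, False] M - {(length M, 0), (0, 1)} \<and>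
     (\<forall>A C. run A [] = Some [True, False] \<longrightarrow>
        walk (nxt (A @ M @ C)) (length A, 0) (sh (length A) Ub) (length A + length M, 0) \<and>
        walk (nxt (A @ M @ C)) (length A + length M, 1) (sh (length A) Db) (length A, 1) \<and>
        concat (map (\<lambda>p. evl (ev (A @ M @ C) p)) (sh (length A) Ub)) = E \<and>
        concat (map (\<lambda>p. evl (ev (A @ M @ C) p)) (sh (length A) Db)) = [])"

lemma Gm_nil: "Gm [] [] [] []"
  by (auto simp: Gm_def ptsw_def lvlw_def sh_def)

lemma Gm_app:
  assumes G1: "Gm M1 U1 D1 E1" and G2: "Gm M2 U2 D2 E2"
  shows "Gm (M1 @ M2) (U1 @ sh (length M1) U2) (sh (length M1) D2 @ D1) (E1 @ E2)"
proof -
  let ?m1 = "length M1" and ?m2 = "length M2"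
  let ?P1 = "ptsw [True, False] M1" and ?P2 = "ptsw [True, False] M2"
  have r1: "run M1 [True, False] = Some [True, False]" and r2: "run M2 [True, False] = Some [True, False]"
    using G1 G2 by (auto simp: Gm_def)
  have d1: "distinct (U1 @ D1)" and d2: "distinct (U2 @ D2)" using G1 G2 by (auto simp: Gm_def)
  have s1: "set (U1 @ D1) = ?P1 - {(?m1, 0), (0, 1)}" and s2: "set (U2 @ D2) = ?P2 - {(?m2, 0), (0, 1)}"
    using G1 G2 by (auto simp: Gm_def)
  have P1e: "(?m1, j) \<in> ?P1 \<longleftrightarrow> j < 2" for j using ptsw_levelend[OF r1] by (simp add: eval_nat_numeral)
  have P20: "(0, j) \<in> ?P2 \<longleftrightarrow> j < 2" for j using ptsw_level0 by (simp add: eval_nat_numeral)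
  have P2e: "(?m2, j) \<in> ?P2 \<longleftrightarrow> j < 2" for j using ptsw_levelend[OF r2] by (simp add: eval_nat_numeral)
  have P: "ptsw [True, False] (M1 @ M2) = ?P1 \<union> shp ?m1 ` ?P2" by (rule ptsw_append[OF r1])
  have setU: "set ((U1 @ sh ?m1 U2) @ sh ?m1 D2 @ D1) = set (U1 @ D1) \<union> shp ?m1 ` set (U2 @ D2)"
    by (auto simp: set_sh)
  have disj0: "set (U1 @ D1) \<inter> shp ?m1 ` set (U2 @ D2) = {}"
  proof (rule ccontr)
    assume "set (U1 @ D1) \<inter> shp ?m1 ` set (U2 @ D2) \<noteq> {}"
    then obtain y where ya: "shp ?m1 y \<in> set (U1 @ D1)" and b0: "y \<in> set (U2 @ D2)"
      by blast
    obtain t j where y: "y = (t, j)" by force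
    have a: "(?m1 + t, j) \<in> set (U1 @ D1)" using ya y by (simp add: shp_def)
    have b: "(t, j) \<in> set (U2 @ D2)" using b0 y by simp
    from a s1 have "(?m1 + t, j) \<in> ?P1" by blast
    then have "?m1 + t \<le> ?m1" by (rule ptsw_le)
    then have t0: "t = 0" by simp
    have "(0, j) \<in> ?P2" "(0, j) \<noteq> (0, 1)" using b s2 t0 by auto
    then have "j = 0" using P20 by simp
    with a t0 have "(?m1, 0) \<in> set (U1 @ D1)" by simp
    then have "(?m1, 0) \<in> ?P1 - {(?m1, 0), (0, 1)}" by (subst s1[symmetric])
    then show False by blast
  qed
  have disj: "(set U1 \<union> set D1) \<inter> (set (sh ?m1 U2) \<union> set (sh ?m1 D2)) = {}"
    using disj0 by (simp add: set_sh image_Un)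
  have dist: "distinct ((U1 @ sh ?m1 U2) @ sh ?m1 D2 @ D1)"
  proof -
    have dd: "distinct (sh ?m1 U2 @ sh ?m1 D2)" using d2 by (simp add: distinct_sh sh_append[symmetric])
    show ?thesis using d1 dd disj unfolding distinct_append set_append by blast
  qed
  have setEq: "set ((U1 @ sh ?m1 U2) @ sh ?m1 D2 @ D1) =
      ptsw [True, False] (M1 @ M2) - {(length (M1 @ M2), 0), (0, 1)}"
  proof (intro set_eqI iffI)
    fix x assume "x \<in> set ((U1 @ sh ?m1 U2) @ sh ?m1 D2 @ D1)"
    then have "x \<in> set (U1 @ D1) \<or> x \<in> shp ?m1 ` set (U2 @ D2)" using setU by blast
    then show "x \<in> ptsw [True, False] (M1 @ M2) - {(length (M1 @ M2), 0), (0, 1)}"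
    proof
      assume x: "x \<in> set (U1 @ D1)"
      obtain i j where xij: "x = (i, j)" by force
      have "x \<in> ?P1 - {(?m1, 0), (0, 1)}" using x s1 by blast
      then have a: "(i, j) \<in> ?P1" "(i, j) \<noteq> (?m1, 0)" "(i, j) \<noteq> (0, 1)" using xij by auto
      have "i \<le> ?m1" using a(1) by (rule ptsw_le)
      then have "(i, j) \<noteq> (?m1 + ?m2, 0)" using a(2) by (cases "?m2 = 0") auto
      moreover have "(i, j) \<in> ptsw [True, False] (M1 @ M2)" using a(1) P by blast
      ultimately show ?thesis using xij a(3) by simp
    next
      assume "x \<in> shp ?m1 ` set (U2 @ D2)"
      then obtain y where y1: "x = shp ?m1 y" and y2: "y \<in> set (U2 @ D2)" by blast
      obtain t j where yt: "y = (t, j)" by force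
      have "y \<in> ?P2 - {(?m2, 0), (0, 1)}" using y2 s2 by blast
      then have b: "(t, j) \<in> ?P2" "(t, j) \<noteq> (?m2, 0)" "(t, j) \<noteq> (0, 1)" using yt by auto
      have x2: "x = (?m1 + t, j)" using y1 yt by (simp add: shp_def)
      have "x \<in> ptsw [True, False] (M1 @ M2)" using b(1) P y1 yt by blast
      moreover have "x \<noteq> (?m1 + ?m2, 0)" using b(2) x2 by simp
      moreover have "x \<noteq> (0, 1)" using b(3) x2 by (cases "?m1 = 0") auto
      ultimately show ?thesis by simp
    qed
  next
    fix x assume x: "x \<in> ptsw [True, False] (M1 @ M2) - {(length (M1 @ M2), 0), (0, 1)}"
    obtain i j where xij: "x = (i, j)" by force
    have x1: "x \<in> ?P1 \<or> x \<in> shp ?m1 ` ?P2" using x P by blast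
    have x2: "x \<noteq> (?m1 + ?m2, 0)" "x \<noteq> (0, 1)" using x by auto
    show "x \<in> set ((U1 @ sh ?m1 U2) @ sh ?m1 D2 @ D1)"
      unfolding setU
    proof (cases "x \<in> ?P1")
      case True
      show "x \<in> set (U1 @ D1) \<union> shp ?m1 ` set (U2 @ D2)"
      proof (cases "x = (?m1, 0)")
        case True
        then have xs: "x = shp ?m1 (0, 0)" by (simp add: shp_def)
        have "?m2 \<noteq> 0" using True x2 by auto
        then have "(0, 0) \<in> ?P2 - {(?m2, 0), (0, 1)}" using P20 by simp
        then have "(0, 0) \<in> set (U2 @ D2)" using s2 by blast
        then show ?thesis using xs by blast
      next
        case False
        then have "x \<in> ?P1 - {(?m1, 0), (0, 1)}" using \<open>x \<in> ?P1\<close> x2 by blast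
        then show ?thesis using s1 by blast
      qed
    next
      case False
      then obtain y where y: "x = shp ?m1 y" "y \<in> ?P2" using x1 by blast
      obtain t j' where yt: "y = (t, j')" by force
      show "x \<in> set (U1 @ D1) \<union> shp ?m1 ` set (U2 @ D2)"
      proof (cases "y = (0, 1)")
        case True
        then have "x = (?m1, 1)" using y by (simp add: shp_def)
        then have "x \<in> ?P1" using P1e by simp
        with False show ?thesis by blast
      next
        case F2: False
        have "y \<noteq> (?m2, 0)" using y x2 by (auto simp: shp_def)
        then have "y \<in> ?P2 - {(?m2, 0), (0, 1)}" using y F2 by blast
        then have "y \<in> set (U2 @ D2)" using s2 by blast
        then show ?thesis using y by blast
      qed
    qed
  qed
  have ctx: "walk (nxt (A @ (M1 @ M2) @ C)) (length A, 0) (sh (length A) (U1 @ sh ?m1 U2)) (length A + length (M1 @ M2), 0) \<and>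
        walk (nxt (A @ (M1 @ M2) @ C)) (length A + length (M1 @ M2), 1) (sh (length A) (sh ?m1 D2 @ D1)) (length A, 1) \<and>
        concat (map (\<lambda>p. evl (ev (A @ (M1 @ M2) @ C) p)) (sh (length A) (U1 @ sh ?m1 U2))) = E1 @ E2 \<and>
        concat (map (\<lambda>p. evl (ev (A @ (M1 @ M2) @ C) p)) (sh (length A) (sh ?m1 D2 @ D1))) = []"
    if rA: "run A [] = Some [True, False]" for A C
  proof -
    have e1: "A @ (M1 @ M2) @ C = A @ M1 @ (M2 @ C)" by simp
    have e2: "A @ (M1 @ M2) @ C = (A @ M1) @ M2 @ C" by simp
    have rA1: "run (A @ M1) [] = Some [True, False]" using rA r1 by (simp add: run_append)
    note g1 = G1[unfolded Gm_def, THEN conjunct2, THEN conjunct2, THEN conjunct2, rule_format, OF rA, of "M2 @ C"]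
    note g2 = G2[unfolded Gm_def, THEN conjunct2, THEN conjunct2, THEN conjunct2, rule_format, OF rA1, of C]
    have shs: "sh (length A) (sh ?m1 X) = sh (length (A @ M1)) X" for X by (simp add: sh_sh)
    show ?thesis
      unfolding sh_append shs map_append concat_append
      using g1 g2 unfolding e1[symmetric] e2[symmetric]
      by (auto intro!: walk_append simp: add.assoc)
  qed
  have "run (M1 @ M2) [True, False] = Some [True, False]" using r1 r2 by (simp add: run_append)
  then show ?thesis unfolding Gm_def using dist setEq ctx by blast
qed


lemmas ctx_simps = sh_def shp_def nxt_def ev_def evl_def lvl_def take_append run_append nth_append

lemmas pts_simps = ptsw_eq lvlw_def atMost_Suc lessThan_Suc numeral_eq_Suc insert_commute

lemma Gm_DT: "Gm [Cross b 0, Cross b 0] [(0,0),(1,1)] [(2,1),(1,0)] []"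
  unfolding Gm_def
  apply (intro conjI allI impI)
  apply simp
  apply simp
  apply (simp add: pts_simps) apply auto[1]
  apply (simp_all add: ctx_simps)
  done

definition Zblk :: "gen \<Rightarrow> gen \<Rightarrow> slice list" where
  "Zblk a u = [Gen a 0] @ (if a = CapR then [] else [Cross False 0]) @
              (if u = CupR then [] else [Cross False 1]) @ [Gen u 1]"

lemma Gm_Z1: "Gm (Zblk CapR CupR) [(0,0),(1,2),(1,1),(1,0)] [(2,1),(1,3)] [CupR, CapR]"
  unfolding Gm_def Zblk_def
  apply (intro conjI allI impI)
  apply simp
  apply simp
  apply (simp add: pts_simps) apply auto[1]
  apply (simp_all add: ctx_simps)
  done

lemma Gm_Z2: "Gm (Zblk CapL CupR) [(0,0),(1,2),(2,2),(2,1),(1,0),(1,1),(2,0)] [(3,1),(2,3),(1,3)] [CupR, CapL]"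
  unfolding Gm_def Zblk_def
  apply (intro conjI allI impI)
  apply simp
  apply simp
  apply (simp add: pts_simps) apply auto[1]
  apply (simp_all add: ctx_simps)
  done

lemma Gm_Z3: "Gm (Zblk CapR CupL) [(0,0),(1,2),(2,1),(2,2),(1,1),(1,0),(2,0)] [(3,1),(2,3),(1,3)] [CupL, CapR]"
  unfolding Gm_def Zblk_def
  apply (intro conjI allI impI)
  apply simp
  apply simp
  apply (simp add: pts_simps) apply auto[1]
  apply (simp_all add: ctx_simps)
  done

lemma Gm_Z4: "Gm (Zblk CapL CupL) [(0,0),(1,2),(2,2),(3,1),(3,2),(2,1),(1,0),(1,1),(2,0),(3,0)] [(4,1),(3,3),(2,3),(1,3)] [CupL, CapL]"
  unfolding Gm_def Zblk_def
  apply (intro conjI allI impI)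
  apply simp
  apply simp
  apply (simp add: pts_simps) apply auto[1]
  apply (simp_all add: ctx_simps)
  done


definition GB :: "slice list \<Rightarrow> (nat \<times> nat) list \<Rightarrow> gen list \<Rightarrow> bool" where
  "GB B Bw E \<longleftrightarrow> run B [] = Some [True, False] \<and> distinct Bw \<and>
     set Bw = ptsw [] B - {(length B, 0)} \<and>
     (\<forall>C. walk (nxt (B @ C)) (length B, 1) Bw (length B, 0) \<and>
          concat (map (\<lambda>p. evl (ev (B @ C) p)) Bw) = E)"

definition GT :: "slice list \<Rightarrow> (nat \<times> nat) list \<Rightarrow> gen list \<Rightarrow> bool" where
  "GT T Tw E \<longleftrightarrow> run T [True, False] = Some [] \<and> distinct Tw \<and>
     set Tw = ptsw [True, False] T - {(0, 1)} \<and>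
     (\<forall>A. run A [] = Some [True, False] \<longrightarrow>
        walk (nxt (A @ T)) (length A, 0) (sh (length A) Tw) (length A, 1) \<and>
        concat (map (\<lambda>p. evl (ev (A @ T) p)) (sh (length A) Tw)) = E)"

lemma GB1: "GB [Gen CapR 0] [(1,1)] [CapR]"
  unfolding GB_def
  apply (intro conjI allI impI)
  apply simp
  apply simp
  apply (simp add: pts_simps) apply auto[1]
  apply (simp_all add: ctx_simps)
  done

lemma GB2: "GB [Gen CapL 0, Cross b 0] [(2,1),(1,0),(1,1)] [CapL]"
  unfolding GB_def
  apply (intro conjI allI impI)
  apply simp
  apply simp
  apply (simp add: pts_simps) apply auto[1]
  apply (simp_all add: ctx_simps)
  done

lemma GT1: "GT [Gen CupL 0] [(0,0)] [CupL]"
  unfolding GT_def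
  apply (intro conjI allI impI)
  apply simp
  apply simp
  apply (simp add: pts_simps) apply auto[1]
  apply (simp_all add: ctx_simps)
  done

lemma GT2: "GT [Cross b 0, Gen CupR 0] [(0,0),(1,1),(1,0)] [CupR]"
  unfolding GT_def
  apply (intro conjI allI impI)
  apply simp
  apply simp
  apply (simp add: pts_simps) apply auto[1]
  apply (simp_all add: ctx_simps)
  done


lemma shp_comp: "shp a \<circ> shp b = shp (a + b)"
  by (auto simp: shp_def fun_eq_iff)

lemma cyc_reach:
  assumes w: "walk f p0 L p0" and p: "p \<in> set L" and q: "q \<in> set L"
  shows "\<exists>m. (f ^^ m) p = q"
proof -
  from walk_nth[OF w] have nth: "\<forall>k<length L. L ! k = (f ^^ k) p0" and cyc: "(f ^^ length L) p0 = p0" by auto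
  obtain a where a: "a < length L" "p = L ! a" using p by (auto simp: in_set_conv_nth)
  obtain b where b: "b < length L" "q = L ! b" using q by (auto simp: in_set_conv_nth)
  have e: "length L - a + b + a = b + length L" using a(1) by simp
  have "(f ^^ (length L - a + b)) p = (f ^^ (length L - a + b)) ((f ^^ a) p0)" using a nth by simp
  also have "\<dots> = (f ^^ (length L - a + b + a)) p0" by (simp add: funpow_add)
  also have "\<dots> = (f ^^ (b + length L)) p0" by (simp only: e)
  also have "\<dots> = (f ^^ b) ((f ^^ length L) p0)" by (simp add: funpow_add)
  also have "\<dots> = q" using cyc b nth by simp
  finally show ?thesis by blast
qed

lemma ccc_L:
  assumes w: "walk (nxt d) p L p" and dL: "distinct L" and sL: "set L = points d"
  shows "ccc_from d p = concat (map (\<lambda>q. evl (ev d q)) L)"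
proof -
  have c: "card (points d) = length L" using dL sL distinct_card by fastforce
  have L: "L = map (\<lambda>k. (nxt d ^^ k) p) [0..<length L]" by (rule walk_map[OF w])
  have "ccc_from d p = concat (map (\<lambda>q. evl (ev d q)) (map (\<lambda>k. (nxt d ^^ k) p) [0..<length L]))"
    unfolding ccc_from_def c by (simp add: evl_def comp_def)
  then show ?thesis using L by simp
qed

lemma assemble:
  assumes GB: "GB B Bw Eb" and GM: "Gm M Ub Db Em" and GT: "GT T Tw Et"
  shows "closed (B @ M @ T) \<and> knot (B @ M @ T) \<and> (length B, 0) \<in> points (B @ M @ T) \<and>
         ccc_from (B @ M @ T) (length B, 0) = Em @ Et @ Eb"
proof -
  let ?g = "B @ M @ T"
  let ?b = "length B" and ?m = "length M"
  let ?PB = "ptsw [] B" and ?PM = "ptsw [True, False] M" and ?PT = "ptsw [True, False] T"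
  have rB: "run B [] = Some [True, False]" and dB: "distinct Bw" and sB: "set Bw = ?PB - {(?b, 0)}"
    using GB by (auto simp: GB_def)
  have rM: "run M [True, False] = Some [True, False]" and dM: "distinct (Ub @ Db)"
    and sM: "set (Ub @ Db) = ?PM - {(?m, 0), (0, 1)}"
    using GM by (auto simp: Gm_def)
  have rT: "run T [True, False] = Some []" and dT: "distinct Tw" and sT: "set Tw = ?PT - {(0, 1)}"
    using GT by (auto simp: GT_def)
  have closed: "closed ?g" using rB rM rT by (simp add: closed_def run_append)
  have rBM: "run (B @ M) [] = Some [True, False]" using rB rM by (simp add: run_append)
  note gm = GM[unfolded Gm_def, THEN conjunct2, THEN conjunct2, THEN conjunct2, rule_format, OF rB, of T]
  note gt = GT[unfolded GT_def, THEN conjunct2, THEN conjunct2, THEN conjunct2, rule_format, OF rBM]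
  note gb = GB[unfolded GB_def, THEN conjunct2, THEN conjunct2, THEN conjunct2, rule_format, of "M @ T"]
  have gt': "walk (nxt ?g) (?b + ?m, 0) (sh (?b + ?m) Tw) (?b + ?m, 1)"
    "concat (map (\<lambda>p. evl (ev ?g p)) (sh (?b + ?m) Tw)) = Et"
    using gt by auto
  let ?L = "sh ?b Ub @ sh (?b + ?m) Tw @ sh ?b Db @ Bw"
  have walk: "walk (nxt ?g) (?b, 0) ?L (?b, 0)"
    by (rule walk_append[OF gm[THEN conjunct1] walk_append[OF gt'(1) walk_append[OF gm[THEN conjunct2, THEN conjunct1] gb[THEN conjunct1]]]])
  have ev: "concat (map (\<lambda>p. evl (ev ?g p)) ?L) = Em @ Et @ Eb"
    unfolding map_append concat_append using gm[THEN conjunct2, THEN conjunct2] gt'(2) gb[THEN conjunct2] by simp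
  have PB0: "(i, j) \<in> ?PB \<Longrightarrow> i \<le> ?b" for i j by (rule ptsw_le)
  have PBe: "(?b, j) \<in> ?PB \<longleftrightarrow> j < 2" for j using ptsw_levelend[OF rB] by (simp add: eval_nat_numeral)
  have PM0: "(i, j) \<in> ?PM \<Longrightarrow> i \<le> ?m" for i j by (rule ptsw_le)
  have PMs: "(0, j) \<in> ?PM \<longleftrightarrow> j < 2" for j using ptsw_level0 by (simp add: eval_nat_numeral)
  have PMe: "(?m, j) \<in> ?PM \<longleftrightarrow> j < 2" for j using ptsw_levelend[OF rM] by (simp add: eval_nat_numeral)
  have PTs: "(0, j) \<in> ?PT \<longleftrightarrow> j < 2" for j using ptsw_level0 by (simp add: eval_nat_numeral)
  have pts: "points ?g = ?PB \<union> shp ?b ` ?PM \<union> shp (?b + ?m) ` ?PT"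
  proof -
    have "points ?g = ?PB \<union> shp ?b ` ptsw [True, False] (M @ T)"
      unfolding points_ptsw by (rule ptsw_append[OF rB])
    also have "ptsw [True, False] (M @ T) = ?PM \<union> shp ?m ` ?PT" by (rule ptsw_append[OF rM])
    finally show ?thesis by (simp only: image_Un image_comp shp_comp Un_assoc)
  qed
  have shpb: "shp a (i, j) = (a + i, j)" for a i j by (simp add: shp_def)
  have setL: "set ?L = shp ?b ` (?PM - {(?m, 0), (0, 1)}) \<union> shp (?b + ?m) ` (?PT - {(0, 1)}) \<union> (?PB - {(?b, 0)})"
  proof -
    have "set ?L = shp ?b ` set (Ub @ Db) \<union> shp (?b + ?m) ` set Tw \<union> set Bw" by (auto simp: set_sh)
    then show ?thesis unfolding sM sT sB .
  qed
  have setEq: "set ?L = points ?g"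
  proof (intro set_eqI iffI)
    fix x assume "x \<in> set ?L"
    then show "x \<in> points ?g" unfolding setL pts by blast
  next
    fix x assume "x \<in> points ?g"
    then have x: "x \<in> ?PB \<or> x \<in> shp ?b ` ?PM \<or> x \<in> shp (?b + ?m) ` ?PT" unfolding pts by blast
    let ?R = "shp ?b ` (?PM - {(?m, 0), (0, 1)}) \<union> shp (?b + ?m) ` (?PT - {(0, 1)}) \<union> (?PB - {(?b, 0)})"
    have "x \<in> ?R"
    proof -
      { assume xB: "x \<in> ?PB"
        have ?thesis
        proof (cases "x = (?b, 0)")
          case True
          show ?thesis
          proof (cases "?m = 0")
            case True
            have "(0, 0) \<in> ?PT - {(0, 1)}" using PTs by simp
            moreover have "x = shp (?b + ?m) (0, 0)" using True \<open>x = (?b, 0)\<close> by (simp add: shpb)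
            ultimately show ?thesis by blast
          next
            case False
            have "(0, 0) \<in> ?PM - {(?m, 0), (0, 1)}" using PMs False by simp
            moreover have "x = shp ?b (0, 0)" using \<open>x = (?b, 0)\<close> by (simp add: shpb)
            ultimately show ?thesis by blast
          qed
        next
          case False then show ?thesis using xB by blast
        qed }
      moreover
      { assume "x \<in> shp ?b ` ?PM"
        then obtain t j where y: "x = (?b + t, j)" "(t, j) \<in> ?PM" by (auto simp: shp_def)
        have ?thesis
        proof (cases "(t, j) = (?m, 0)")
          case True
          have "(0, 0) \<in> ?PT - {(0, 1)}" using PTs by simp
          moreover have "x = shp (?b + ?m) (0, 0)" using True y by (simp add: shpb)
          ultimately show ?thesis by blast
        next
          case F1: False
          show ?thesis
          proof (cases "(t, j) = (0, 1)")
            case True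
            then have "x = (?b, 1)" "x \<noteq> (?b, 0)" using y by auto
            then have "x \<in> ?PB - {(?b, 0)}" using PBe by simp
            then show ?thesis by blast
          next
            case False
            then have "(t, j) \<in> ?PM - {(?m, 0), (0, 1)}" using F1 y by blast
            moreover have "x = shp ?b (t, j)" using y by (simp add: shpb)
            ultimately show ?thesis by blast
          qed
        qed }
      moreover
      { assume "x \<in> shp (?b + ?m) ` ?PT"
        then obtain t j where y: "x = (?b + ?m + t, j)" "(t, j) \<in> ?PT" by (auto simp: shp_def)
        have ?thesis
        proof (cases "(t, j) = (0, 1)")
          case True
          show ?thesis
          proof (cases "?m = 0")
            case True
            then have "x = (?b, 1)" using y \<open>(t, j) = (0, 1)\<close> by auto
            then have "x \<in> ?PB - {(?b, 0)}" using PBe by simp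
            then show ?thesis by blast
          next
            case False
            then have "(?m, 1) \<in> ?PM - {(?m, 0), (0, 1)}" using PMe by simp
            moreover have "x = shp ?b (?m, 1)" using y \<open>(t, j) = (0, 1)\<close> by (simp add: shpb)
            ultimately show ?thesis by blast
          qed
        next
          case False
          then have "(t, j) \<in> ?PT - {(0, 1)}" using y by blast
          moreover have "x = shp (?b + ?m) (t, j)" using y by (simp add: shpb)
          ultimately show ?thesis by blast
        qed }
      ultimately show ?thesis using x by blast
    qed
    then show "x \<in> set ?L" using setL by blast
  qed
  have disjA: "set (sh (?b + ?m) Tw) \<inter> (set (sh ?b Ub) \<union> set (sh ?b Db)) = {}"
  proof (rule ccontr)
    assume "\<not> ?thesis"
    then obtain z where z1: "z \<in> shp (?b + ?m) ` set Tw" and z2: "z \<in> shp ?b ` set (Ub @ Db)"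
      by (auto simp: set_sh)
    obtain t j where t: "z = (?b + ?m + t, j)" "(t, j) \<in> ?PT - {(0, 1)}" using z1 sT by (auto simp: shp_def)
    obtain t' j' where t': "z = (?b + t', j')" "(t', j') \<in> ?PM - {(?m, 0), (0, 1)}" using z2 sM by (auto simp: shp_def)
    have "t' \<le> ?m" using t'(2) PM0 by blast
    then have "t = 0" "t' = ?m" "j = j'" using t(1) t'(1) by auto
    then have "j = 0" using t(2) PTs by auto
    then show False using t' \<open>t' = ?m\<close> \<open>j = j'\<close> by auto
  qed
  have disjB: "set Bw \<inter> (set (sh ?b Ub) \<union> set (sh ?b Db)) = {}"
  proof (rule ccontr)
    assume "\<not> ?thesis"
    then obtain z where z1: "z \<in> set Bw" and z2: "z \<in> shp ?b ` set (Ub @ Db)"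
      by (auto simp: set_sh)
    obtain i j where ij: "z = (i, j)" by force
    have zB: "(i, j) \<in> ?PB - {(?b, 0)}" using z1 sB ij by blast
    obtain t' j' where t': "z = (?b + t', j')" "(t', j') \<in> ?PM - {(?m, 0), (0, 1)}" using z2 sM by (auto simp: shp_def)
    have "i \<le> ?b" using zB PB0 by blast
    then have "t' = 0" "i = ?b" "j = j'" using t'(1) ij by auto
    then have "j = 1" using zB PBe by auto
    then show False using t' \<open>t' = 0\<close> \<open>j = j'\<close> by auto
  qed
  have disjC: "set Bw \<inter> set (sh (?b + ?m) Tw) = {}"
  proof (rule ccontr)
    assume "\<not> ?thesis"
    then obtain z where z1: "z \<in> set Bw" and z2: "z \<in> shp (?b + ?m) ` set Tw"
      by (auto simp: set_sh)
    obtain i j where ij: "z = (i, j)" by force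
    have zB: "(i, j) \<in> ?PB - {(?b, 0)}" using z1 sB ij by blast
    obtain t j' where t: "z = (?b + ?m + t, j')" "(t, j') \<in> ?PT - {(0, 1)}" using z2 sT by (auto simp: shp_def)
    have "i \<le> ?b" using zB PB0 by blast
    then have "t = 0" "i = ?b" "j = j'" using t(1) ij by auto
    then have "j = 1" using zB PBe by auto
    then show False using t \<open>t = 0\<close> \<open>j = j'\<close> by auto
  qed
  have dist: "distinct ?L"
  proof -
    have d1: "distinct (sh ?b Ub @ sh ?b Db)" using dM by (simp add: distinct_sh sh_append[symmetric])
    have d2: "distinct (sh (?b + ?m) Tw)" using dT by (simp add: distinct_sh)
    show ?thesis using d1 d2 dB disjA disjB disjC unfolding distinct_append set_append by blast
  qed
  have p0: "(?b, 0) \<in> points ?g" using pts PBe by simp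
  have knot: "knot ?g"
  proof -
    have "\<forall>p\<in>points ?g. \<forall>q\<in>points ?g. \<exists>m. (nxt ?g ^^ m) p = q"
      unfolding setEq[symmetric] using cyc_reach[OF walk] by blast
    then show ?thesis unfolding knot_def using closed p0 by blast
  qed
  have "ccc_from ?g (?b, 0) = Em @ Et @ Eb"
    using ccc_L[OF walk dist setEq] ev by simp
  then show ?thesis using closed knot p0 by blast
qed


section \<open>Writhe\<close>

definition wterm :: "slice \<Rightarrow> bool list \<Rightarrow> int" where
  "wterm s w = (case s of Gen g k \<Rightarrow> 0
     | Cross b k \<Rightarrow> (if b then 1 else -1) * (if w ! k = w ! Suc k then 1 else -1))"

definition wr :: "bool list \<Rightarrow> slice list \<Rightarrow> int" where
  "wr w d = (\<Sum>i<length d. wterm (d ! i) (lvlw w d i))"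

lemma writhe_wr: "writhe d = wr [] d"
  unfolding writhe_def wr_def wterm_def lvl_lvlw ..

lemma sum_split_lt: "(\<Sum>i<a + (b::nat). f i) = (\<Sum>i<a. f i) + (\<Sum>i<b. f (a + i)) "
  by (induction b) (auto simp: add.assoc)

lemma wr_append:
  assumes "run A w = Some w'"
  shows "wr w (A @ B) = wr w A + wr w' B"
proof -
  have "wr w (A @ B) = (\<Sum>i<length A. wterm ((A @ B) ! i) (lvlw w (A @ B) i)) +
        (\<Sum>i<length B. wterm ((A @ B) ! (length A + i)) (lvlw w (A @ B) (length A + i)))"
    unfolding wr_def by (simp add: sum_split_lt)
  also have "(\<Sum>i<length A. wterm ((A @ B) ! i) (lvlw w (A @ B) i)) = wr w A"
    unfolding wr_def by (intro sum.cong) (auto simp: nth_append lvlw_app1)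
  also have "(\<Sum>i<length B. wterm ((A @ B) ! (length A + i)) (lvlw w (A @ B) (length A + i))) = wr w' B"
    unfolding wr_def by (intro sum.cong) (auto simp: lvlw_app2[OF assms])
  finally show ?thesis .
qed

lemmas wr_simps = wr_def wterm_def lvlw_def lessThan_Suc numeral_eq_Suc

lemma wr_DT: "wr [True, False] [Cross s 0, Cross s 0] = 2 * (if s then -1 else 1)"
  by (simp add: wr_simps)

lemma wr_B1: "wr [] [Gen CapR 0] = 0" by (simp add: wr_simps)
lemma wr_B2: "wr [] [Gen CapL 0, Cross s 0] = (if s then -1 else 1)" by (simp add: wr_simps)
lemma wr_T1: "wr [True, False] [Gen CupL 0] = 0" by (simp add: wr_simps)
lemma wr_T2: "wr [True, False] [Cross False 0, Gen CupR 0] = 1" by (simp add: wr_simps)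

lemma cap_cases: "is_cap g \<Longrightarrow> g = CapR \<or> g = CapL" by (cases g) auto
lemma cup_cases: "\<not> is_cap g \<Longrightarrow> g = CupR \<or> g = CupL" by (cases g) auto

lemma wr_Z: "is_cap a \<Longrightarrow> \<not> is_cap u \<Longrightarrow>
   wr [True, False] (Zblk a u) = (if a = CapR then 0 else 1) + (if u = CupR then 0 else 1)"
  by (auto dest!: cap_cases cup_cases simp: Zblk_def wr_simps)

lemma Gm_Z: "is_cap a \<Longrightarrow> \<not> is_cap u \<Longrightarrow> \<exists>U D. Gm (Zblk a u) U D [u, a]"
  using Gm_Z1 Gm_Z2 Gm_Z3 Gm_Z4 by (auto dest!: cap_cases cup_cases)

lemma run_DTs: "run (concat (replicate k [Cross s 0, Cross s 0])) [True, False] = Some [True, False]"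
  by (induction k) (auto simp: run_append)

lemma wr_DTs: "wr [True, False] (concat (replicate k [Cross s 0, Cross s 0])) = int k * (2 * (if s then -1 else 1))"
proof (induction k)
  case 0 then show ?case by (simp add: wr_def)
next
  case (Suc k)
  have "wr [True, False] (concat (replicate (Suc k) [Cross s 0, Cross s 0])) =
        wr [True, False] ([Cross s 0, Cross s 0] @ concat (replicate k [Cross s 0, Cross s 0]))" by simp
  also have "\<dots> = wr [True, False] [Cross s 0, Cross s 0] + wr [True, False] (concat (replicate k [Cross s 0, Cross s 0]))"
    by (rule wr_append) simp
  finally show ?case using Suc wr_DT by (simp add: algebra_simps)
qed

lemma Gm_DTs: "\<exists>U D. Gm (concat (replicate k [Cross s 0, Cross s 0])) U D []"
proof (induction k)
  case 0 then show ?case using Gm_nil by auto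
next
  case (Suc k)
  then obtain U D where "Gm (concat (replicate k [Cross s 0, Cross s 0])) U D []" by blast
  from Gm_app[OF Gm_DT this] show ?case by auto
qed

section \<open>Isotopy\<close>

lemma iso_step: "dmove d e \<Longrightarrow> closed d \<Longrightarrow> closed e \<Longrightarrow> isotopic d e"
  unfolding isotopic_def by (rule r_into_equivclp) simp

lemma iso_trans: "isotopic a b \<Longrightarrow> isotopic b c \<Longrightarrow> isotopic a c"
  unfolding isotopic_def by (rule equivclp_trans)

lemma iso_refl: "isotopic a a"
  unfolding isotopic_def by simp

lemma iso_base2:
  assumes "run Y [True, False] = Some []"
  shows "isotopic ([Gen CapL 0, Cross s 0] @ Y) ([Gen CapR 0] @ Y)"
proof (rule iso_step)
  show "dmove ([Gen CapL 0, Cross s 0] @ Y) ([Gen CapR 0] @ Y)"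
    using dmove.twist_cap[of CapL "[]" 0 s Y] by simp
qed (use assms in \<open>simp_all add: closed_def run_append\<close>)

lemma iso_DTs:
  assumes R: "run R [True, False] = Some []"
  shows "isotopic ([Gen CapR 0] @ concat (replicate k [Cross s 0, Cross s 0]) @ R) ([Gen CapR 0] @ R)"
proof (induction k)
  case 0 then show ?case by (simp add: iso_refl)
next
  case (Suc k)
  let ?X = "concat (replicate k [Cross s 0, Cross s 0]) @ R"
  have rX: "run ?X [True, False] = Some []" using R run_DTs by (simp add: run_append)
  have 1: "isotopic ([Gen CapR 0, Cross s 0, Cross s 0] @ ?X) ([Gen CapL 0, Cross s 0] @ ?X)"
  proof (rule iso_step)
    show "dmove ([Gen CapR 0, Cross s 0, Cross s 0] @ ?X) ([Gen CapL 0, Cross s 0] @ ?X)"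
      using dmove.twist_cap[of CapR "[]" 0 s "[Cross s 0] @ ?X"] by simp
  qed (use rX in \<open>simp_all add: closed_def run_append\<close>)
  have 2: "isotopic ([Gen CapL 0, Cross s 0] @ ?X) ([Gen CapR 0] @ ?X)" by (rule iso_base2[OF rX])
  have "isotopic ([Gen CapR 0] @ concat (replicate (Suc k) [Cross s 0, Cross s 0]) @ R) ([Gen CapR 0] @ ?X)"
    using iso_trans[OF 1 2] by simp
  then show ?case using Suc iso_trans by blast
qed

lemma iso_zig:
  assumes X: "run X [True, False] = Some []"
  shows "isotopic ([Gen CapR 0, Gen CapR 0, Gen CupR 1] @ X) ([Gen CapR 0] @ X)"
proof (rule iso_step)
  show "dmove ([Gen CapR 0, Gen CapR 0, Gen CupR 1] @ X) ([Gen CapR 0] @ X)"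
    using dmove.zig1[of CapR CupR "[Gen CapR 0]" 0 X] by simp
qed (use X in \<open>simp_all add: closed_def run_append\<close>)

lemma iso_tcap:
  assumes X: "run X [True, False, True, False] = Some []"
  shows "isotopic ([Gen CapR 0, Gen CapL 0, Cross False 0] @ X) ([Gen CapR 0, Gen CapR 0] @ X)"
proof (rule iso_step)
  show "dmove ([Gen CapR 0, Gen CapL 0, Cross False 0] @ X) ([Gen CapR 0, Gen CapR 0] @ X)"
    using dmove.twist_cap[of CapL "[Gen CapR 0]" 0 False X] by simp
qed (use X in \<open>simp_all add: closed_def run_append\<close>)

lemma iso_tcup:
  assumes X: "run X [True, False] = Some []"
  shows "isotopic ([Gen CapR 0, Gen CapR 0, Cross False 1, Gen CupL 1] @ X) ([Gen CapR 0, Gen CapR 0, Gen CupR 1] @ X)"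
proof (rule iso_step)
  show "dmove ([Gen CapR 0, Gen CapR 0, Cross False 1, Gen CupL 1] @ X) ([Gen CapR 0, Gen CapR 0, Gen CupR 1] @ X)"
    using dmove.twist_cup[of CupL "[Gen CapR 0, Gen CapR 0]" False 1 X] by simp
qed (use X in \<open>simp_all add: closed_def run_append\<close>)

lemma iso_Z:
  assumes a: "is_cap a" and u: "\<not> is_cap u" and X: "run X [True, False] = Some []"
  shows "isotopic ([Gen CapR 0] @ Zblk a u @ X) ([Gen CapR 0] @ X)"
proof -
  have z: "isotopic ([Gen CapR 0, Gen CapR 0, Gen CupR 1] @ X) ([Gen CapR 0] @ X)" by (rule iso_zig[OF X])
  have tu: "isotopic ([Gen CapR 0, Gen CapR 0, Cross False 1, Gen CupL 1] @ X) ([Gen CapR 0] @ X)"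
    by (rule iso_trans[OF iso_tcup[OF X] z])
  consider "a = CapR" "u = CupR" | "a = CapL" "u = CupR" | "a = CapR" "u = CupL" | "a = CapL" "u = CupL"
    using cap_cases[OF a] cup_cases[OF u] by blast
  then show ?thesis
  proof cases
    case 1 then show ?thesis using z by (simp add: Zblk_def)
  next
    case 2
    have "isotopic ([Gen CapR 0, Gen CapL 0, Cross False 0] @ [Gen CupR 1] @ X) ([Gen CapR 0, Gen CapR 0] @ [Gen CupR 1] @ X)"
      by (rule iso_tcap) (use X in \<open>simp add: run_append\<close>)
    then show ?thesis using 2 z iso_trans by (fastforce simp: Zblk_def)
  next
    case 3 then show ?thesis using tu by (simp add: Zblk_def)
  next
    case 4
    have "isotopic ([Gen CapR 0, Gen CapL 0, Cross False 0] @ [Cross False 1, Gen CupL 1] @ X) ([Gen CapR 0, Gen CapR 0] @ [Cross False 1, Gen CupL 1] @ X)"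
      by (rule iso_tcap) (use X in \<open>simp add: run_append\<close>)
    then show ?thesis using 4 tu iso_trans by (fastforce simp: Zblk_def)
  qed
qed

lemma iso_top: "isotopic [Gen CapR 0, Cross False 0, Gen CupR 0] [Gen CapR 0, Gen CupL 0]"
proof (rule iso_step)
  show "dmove [Gen CapR 0, Cross False 0, Gen CupR 0] [Gen CapR 0, Gen CupL 0]"
    using dmove.twist_cup[of CupR "[Gen CapR 0]" False 0 "[]"] by simp
qed (simp_all add: closed_def)


section \<open>Combinatorics of cycles\<close>

fun zb :: "(gen \<times> int) list \<Rightarrow> slice list" where
  "zb (u # a # rest) = Zblk (fst a) (fst u) @ zb rest"
| "zb _ = []"

fun twc :: "(gen \<times> int) list \<Rightarrow> int" where
  "twc (u # a # rest) = (if fst a = CapR then 0 else 1) + (if fst u = CupR then 0 else 1) + twc rest"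
| "twc _ = 0"

definition okmid :: "(gen \<times> int) list \<Rightarrow> bool" where
  "okmid mid \<longleftrightarrow> even (length mid) \<and> (\<forall>i<length mid. is_cap (fst (mid ! i)) = odd i)"

lemma okmid_cons: "okmid (u # a # rest) \<Longrightarrow> \<not> is_cap (fst u) \<and> is_cap (fst a) \<and> okmid rest"
proof -
  assume h: "okmid (u # a # rest)"
  then have "is_cap (fst ((u # a # rest) ! 0)) = odd (0::nat)" "is_cap (fst ((u # a # rest) ! 1)) = odd (1::nat)"
    unfolding okmid_def by auto
  moreover have "okmid rest" unfolding okmid_def
  proof (intro conjI allI impI)
    show "even (length rest)" using h by (simp add: okmid_def)
  next
    fix i assume "i < length rest"
    then have "Suc (Suc i) < length (u # a # rest)" by simp
    then have "is_cap (fst ((u # a # rest) ! (Suc (Suc i)))) = odd (Suc (Suc i))" using h unfolding okmid_def by blast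
    then show "is_cap (fst (rest ! i)) = odd i" by simp
  qed
  ultimately show ?thesis by simp
qed

lemma okmid_single: "\<not> okmid [x]" by (simp add: okmid_def)

definition tm :: "gen \<times> int \<Rightarrow> int" where
  "tm e = (-1) ^ nat \<bar>snd e\<bar> * turn (fst e)"

lemma tT_simps: "tT [] = 0" "tT (e # es) = tm e + tT es" "tT (xs @ ys) = tT xs + tT ys"
  by (simp_all add: tT_def tm_def)

lemma tW_simps: "tW [] = 0" "tW (e # es) = snd e + tW es" "tW (xs @ ys) = tW xs + tW ys"
  by (simp_all add: tW_def)

lemma m1p: "(-1::int) ^ nat \<bar>w\<bar> = (if even w then 1 else -1)"
proof -
  have "even (nat \<bar>w\<bar>) \<longleftrightarrow> even w" by (simp add: even_nat_iff)
  then show ?thesis by (simp add: minus_one_power_iff)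
qed

lemma cap_mod: "is_cap g \<Longrightarrow> 4 dvd (tm (g, w) - (1 + 2 * (w + (if g = CapR then 0 else 1))))"
  apply (cases g)
  apply (simp_all add: tm_def m1p)
  apply presburger+
  done

lemma cup_mod: "\<not> is_cap g \<Longrightarrow> 4 dvd (tm (g, w) - (-1 + 2 * (w + (if g = CupR then 0 else 1))))"
  apply (cases g)
  apply (simp_all add: tm_def m1p)
  apply presburger+
  done

lemma top_mod: "\<not> is_cap g \<Longrightarrow> 4 dvd (tm (g, w) - (1 + 2 * (w + (if g = CupL then 0 else 1))))"
  apply (cases g)
  apply (simp_all add: tm_def m1p)
  apply presburger+
  done

lemma zb_props:
  "okmid mid \<Longrightarrow> (\<exists>U D. Gm (zb mid) U D (map fst mid)) \<and> wr [True, False] (zb mid) = twc mid \<and>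
     4 dvd (tT mid - 2 * (tW mid + twc mid)) \<and>
     (\<forall>R. run R [True, False] = Some [] \<longrightarrow> isotopic ([Gen CapR 0] @ zb mid @ R) ([Gen CapR 0] @ R))"
proof (induction mid rule: zb.induct)
  case (1 u a rest)
  from okmid_cons[OF "1.prems"] have u: "\<not> is_cap (fst u)" and a: "is_cap (fst a)" and ok: "okmid rest" by auto
  from "1.IH"[OF ok] obtain U D where G: "Gm (zb rest) U D (map fst rest)"
    and w: "wr [True, False] (zb rest) = twc rest"
    and m: "4 dvd (tT rest - 2 * (tW rest + twc rest))"
    and iso: "\<And>R. run R [True, False] = Some [] \<Longrightarrow> isotopic ([Gen CapR 0] @ zb rest @ R) ([Gen CapR 0] @ R)"
    by blast
  have rZ: "run (Zblk (fst a) (fst u)) [True, False] = Some [True, False]"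
    using Gm_Z[OF a u] by (auto simp: Gm_def)
  have rR: "run (zb rest) [True, False] = Some [True, False]" using G by (simp add: Gm_def)
  obtain U1 D1 where G1: "Gm (Zblk (fst a) (fst u)) U1 D1 [fst u, fst a]" using Gm_Z[OF a u] by blast
  have P1: "\<exists>U D. Gm (zb (u # a # rest)) U D (map fst (u # a # rest))"
    using Gm_app[OF G1 G] by auto
  have P2: "wr [True, False] (zb (u # a # rest)) = twc (u # a # rest)"
    using wr_append[OF rZ, of "zb rest"] wr_Z[OF a u] w by simp
  have ma: "4 dvd (tm a - (1 + 2 * (snd a + (if fst a = CapR then 0 else 1))))"
    using cap_mod[OF a, of "snd a"] by simp
  have mu: "4 dvd (tm u - (-1 + 2 * (snd u + (if fst u = CupR then 0 else 1))))"
    using cup_mod[OF u, of "snd u"] by simp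
  have P3: "4 dvd (tT (u # a # rest) - 2 * (tW (u # a # rest) + twc (u # a # rest)))"
  proof -
    have "tT (u # a # rest) - 2 * (tW (u # a # rest) + twc (u # a # rest)) =
      (tm u - (-1 + 2 * (snd u + (if fst u = CupR then 0 else 1)))) +
      (tm a - (1 + 2 * (snd a + (if fst a = CapR then 0 else 1)))) +
      (tT rest - 2 * (tW rest + twc rest))"
      by (simp add: tT_simps tW_simps algebra_simps)
    then show ?thesis using ma mu m by (metis dvd_add)
  qed
  have P4: "isotopic ([Gen CapR 0] @ zb (u # a # rest) @ R) ([Gen CapR 0] @ R)"
    if R: "run R [True, False] = Some []" for R
  proof -
    have rX: "run (zb rest @ R) [True, False] = Some []" using rR R by (simp add: run_append)
    have "isotopic ([Gen CapR 0] @ Zblk (fst a) (fst u) @ (zb rest @ R)) ([Gen CapR 0] @ zb rest @ R)"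
      by (rule iso_Z[OF a u rX])
    then show ?thesis using iso[OF R] iso_trans by fastforce
  qed
  show ?case using P1 P2 P3 P4 by blast
next
  case ("2_1") then show ?case using Gm_nil by (auto simp: wr_def tT_def tW_def iso_refl)
next
  case ("2_2" v) then show ?case using okmid_single by blast
qed

lemma cyc_eq_rot: "cyc_eq a (rotate 1 b) \<Longrightarrow> cyc_eq a b"
proof -
  assume "cyc_eq a (rotate 1 b)"
  then obtain n where n: "rotate n a = rotate 1 b" by (auto simp: cyc_eq_def)
  have "rotate (length b - 1 + n) a = rotate (length b - 1) (rotate 1 b)" by (simp add: n rotate_rotate[symmetric])
  also have "\<dots> = b"
  proof (cases b)
    case Nil then show ?thesis by simp
  next
    case (Cons y ys)
    have "rotate (length b - 1) (rotate 1 b) = rotate (length b - 1 + 1) b" by (rule rotate_rotate)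
    also have "length b - 1 + 1 = length b" using Cons by simp
    finally show ?thesis by simp
  qed
  finally show ?thesis unfolding cyc_eq_def by blast
qed


lemma wlemma: "(if even v then 0 else (if v < 0 then -1 else 1)) + int (nat (\<bar>v\<bar> div 2)) * (2 * (if v < 0 then -1 else 1)) = (v::int)"
proof -
  have "int (nat (\<bar>v\<bar> div 2)) = \<bar>v\<bar> div 2" by simp
  then show ?thesis by (cases "v < 0"; cases "even v") (simp_all; presburger)+
qed

lemma par_lemma: "4 dvd (tt - 2 - 2*(W + fx + F)) \<Longrightarrow> tt = 2 \<or> tt = -2 \<Longrightarrow> fx = 0 \<or> fx = 1 \<Longrightarrow> (even (W - F) \<longleftrightarrow> fx = 0)" for tt W fx F :: int
  by presburger

lemma main_cap:
  assumes c: "c = x # mid @ [t]" and x: "is_cap (fst x)" and t: "\<not> is_cap (fst t)" and ok: "okmid mid"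
    and Tc: "tT c = 2 \<or> tT c = -2"
  shows "\<exists>g. unknot_diagram g \<and> writhe g = tW c \<and> (\<exists>p\<in>points g. cyc_eq (ccc_from g p) (U c))"
proof -
  obtain Um Dm where Gz: "Gm (zb mid) Um Dm (map fst mid)" and wz: "wr [True, False] (zb mid) = twc mid"
    and mz: "4 dvd (tT mid - 2 * (tW mid + twc mid))"
    and isoz: "\<And>R. run R [True, False] = Some [] \<Longrightarrow> isotopic ([Gen CapR 0] @ zb mid @ R) ([Gen CapR 0] @ R)"
    using zb_props[OF ok] by blast
  define ft where "ft = (if fst t = CupL then 0 else 1::int)"
  define fx where "fx = (if fst x = CapR then 0 else 1::int)"
  define F where "F = twc mid + ft"
  define v where "v = tW c - F"
  define s where "s = (v < 0)"
  define k where "k = nat (\<bar>v\<bar> div 2)"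
  define B where "B = (if fst x = CapR then [Gen CapR 0] else [Gen CapL 0, Cross s 0])"
  define T where "T = (if fst t = CupL then [Gen CupL 0] else [Cross False 0, Gen CupR 0])"
  define DT where "DT = concat (replicate k [Cross s 0, Cross s 0])"
  define g where "g = B @ (DT @ zb mid) @ T"
  have mx: "4 dvd (tm x - (1 + 2 * (snd x + fx)))" using cap_mod[OF x, of "snd x"] by (simp add: fx_def)
  have mt: "4 dvd (tm t - (1 + 2 * (snd t + ft)))" using top_mod[OF t, of "snd t"] by (simp add: ft_def)
  have tTc: "tT c = tm x + tT mid + tm t" by (simp add: c tT_simps)
  have tWc: "tW c = snd x + tW mid + snd t" by (simp add: c tW_simps)
  have "tT c - 2 - 2 * (tW c + fx + F) =
        (tm x - (1 + 2 * (snd x + fx))) + (tT mid - 2 * (tW mid + twc mid)) + (tm t - (1 + 2 * (snd t + ft)))"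
    by (simp add: tTc tWc F_def algebra_simps)
  then have "4 dvd (tT c - 2 - 2 * (tW c + fx + F))" using mx mz mt by (metis dvd_add)
  from par_lemma[OF this Tc] have par: "even v \<longleftrightarrow> fst x = CapR" by (auto simp: fx_def v_def)
  have xc: "fst x = CapR \<or> fst x = CapL" using cap_cases[OF x] .
  have tc: "fst t = CupR \<or> fst t = CupL" using cup_cases[OF t] .
  have rB: "run B [] = Some [True, False]" using xc by (auto simp: B_def)
  have rT: "run T [True, False] = Some []" using tc by (auto simp: T_def)
  have rDT: "run DT [True, False] = Some [True, False]" by (simp add: DT_def run_DTs)
  have rz: "run (zb mid) [True, False] = Some [True, False]" using Gz by (simp add: Gm_def)
  have wB: "wr [] B = (if even v then 0 else (if v < 0 then -1 else 1))"
  proof (cases "fst x = CapR")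
    case True
    then have "even v" using par by simp
    then show ?thesis using True by (simp add: B_def wr_B1)
  next
    case False
    then have "\<not> even v" using par by simp
    then show ?thesis using False by (simp add: B_def wr_B2 s_def)
  qed
  have wT: "wr [True, False] T = ft" using tc by (auto simp: T_def ft_def wr_T1 wr_T2)
  have wDT: "wr [True, False] DT = int k * (2 * (if v < 0 then -1 else 1))" by (simp add: DT_def wr_DTs s_def)
  have "writhe g = wr [] B + (wr [True, False] DT + (wr [True, False] (zb mid) + wr [True, False] T))"
    unfolding g_def writhe_wr
    by (simp add: wr_append[OF rB] wr_append[OF rDT] wr_append[OF rz])
  also have "\<dots> = (wr [] B + wr [True, False] DT) + F" using wT wz by (simp add: F_def)
  also have "wr [] B + wr [True, False] DT = v" unfolding wB wDT k_def by (rule wlemma)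
  finally have writhe: "writhe g = tW c" by (simp add: v_def F_def)
  have "\<exists>Bw. GB B Bw [fst x]" using xc GB1 GB2[of s] by (auto simp: B_def)
  then obtain Bw where GB: "GB B Bw [fst x]" by blast
  have "\<exists>Tw. GT T Tw [fst t]" using tc GT1 GT2[of False] by (auto simp: T_def)
  then obtain Tw where GT: "GT T Tw [fst t]" by blast
  obtain U0 D0 where G0: "Gm DT U0 D0 []" using Gm_DTs[of k s] unfolding DT_def by blast
  have GM: "Gm (DT @ zb mid) (U0 @ sh (length DT) Um) (sh (length DT) Dm @ D0) ([] @ map fst mid)"
    by (rule Gm_app[OF G0 Gz])
  note A0 = assemble[OF GB GM GT, folded g_def]
  have A: "closed g" "knot g" "(length B, 0) \<in> points g"
    using A0 by blast+
  have A4: "ccc_from g (length B, 0) = map fst mid @ [fst t] @ [fst x]"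
    using A0[THEN conjunct2, THEN conjunct2, THEN conjunct2] by simp
  have "ccc_from g (length B, 0) = rotate 1 (U c)" using A4 by (simp add: c U_def)
  then have "rotate 0 (ccc_from g (length B, 0)) = rotate 1 (U c)" by simp
  then have "cyc_eq (ccc_from g (length B, 0)) (rotate 1 (U c))" unfolding cyc_eq_def by blast
  then have cyc: "cyc_eq (ccc_from g (length B, 0)) (U c)" by (rule cyc_eq_rot)
  have rY: "run (DT @ zb mid @ T) [True, False] = Some []" using rDT rz rT by (simp add: run_append)
  have i1: "isotopic g ([Gen CapR 0] @ DT @ zb mid @ T)"
  proof (cases "fst x = CapR")
    case True
    then have "g = [Gen CapR 0] @ DT @ zb mid @ T" by (simp add: g_def B_def)
    then show ?thesis by (simp only: iso_refl)
  next
    case False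
    then have "g = [Gen CapL 0, Cross s 0] @ DT @ zb mid @ T" by (simp add: g_def B_def)
    then show ?thesis using iso_base2[OF rY, of s] by (simp only:)
  qed
  have i2: "isotopic ([Gen CapR 0] @ DT @ zb mid @ T) ([Gen CapR 0] @ zb mid @ T)"
    unfolding DT_def by (rule iso_DTs) (use rz rT in \<open>simp add: run_append\<close>)
  have i3: "isotopic ([Gen CapR 0] @ zb mid @ T) ([Gen CapR 0] @ T)" by (rule isoz[OF rT])
  have i4: "isotopic ([Gen CapR 0] @ T) [Gen CapR 0, Gen CupL 0]"
  proof (cases "fst t = CupL")
    case True
    then have "[Gen CapR 0] @ T = [Gen CapR 0, Gen CupL 0]" by (simp add: T_def)
    then show ?thesis by (simp only: iso_refl)
  next
    case False
    then have "[Gen CapR 0] @ T = [Gen CapR 0, Cross False 0, Gen CupR 0]" by (simp add: T_def)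
    then show ?thesis using iso_top by (simp only:)
  qed
  have "isotopic g [Gen CapR 0, Gen CupL 0]" using iso_trans[OF i1 iso_trans[OF i2 iso_trans[OF i3 i4]]] .
  then have "unknot_diagram g" using A(2) by (simp add: unknot_diagram_def)
  then show ?thesis using writhe cyc A(3) by blast
qed

lemma alt_par: "alternating c \<Longrightarrow> i < length c \<Longrightarrow> is_cap (fst (c ! i)) = (is_cap (fst (c ! 0)) = even i)"
proof (induction i)
  case 0 then show ?case by simp
next
  case (Suc i)
  then have "i < length c" by simp
  from Suc.prems(1) this have "is_cap (fst (c ! i)) \<noteq> is_cap (fst (c ! (Suc i mod length c)))"
    unfolding alternating_def by blast
  moreover have "Suc i mod length c = Suc i" using Suc.prems(2) by simp
  ultimately show ?case using Suc.IH[OF Suc.prems(1) \<open>i < length c\<close>] by auto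
qed

lemma alt_even: "alternating c \<Longrightarrow> c \<noteq> [] \<Longrightarrow> even (length c)"
proof -
  assume a: "alternating c" and ne: "c \<noteq> []"
  let ?n = "length c"
  have lt: "?n - 1 < ?n" using ne by simp
  have "Suc (?n - 1) mod ?n = 0" using ne by simp
  then have "is_cap (fst (c ! (?n - 1))) \<noteq> is_cap (fst (c ! 0))"
    using a lt unfolding alternating_def by (metis)
  then have "odd (?n - 1)" using alt_par[OF a lt] by auto
  then show ?thesis using ne by (cases ?n) auto
qed

lemma decomp:
  assumes h: "\<forall>i<length c. is_cap (fst (c ! i)) = even i" and e: "even (length c)" and ne: "c \<noteq> []"
  shows "\<exists>x mid t. c = x # mid @ [t] \<and> is_cap (fst x) \<and> \<not> is_cap (fst t) \<and> okmid mid"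
proof -
  obtain x r where c: "c = x # r" using ne by (cases c) auto
  have rne: "r \<noteq> []" using e c by auto
  define mid where "mid = butlast r"
  define t where "t = last r"
  have r: "r = mid @ [t]" using rne by (simp add: mid_def t_def)
  have c2: "c = x # mid @ [t]" using c r by simp
  have "is_cap (fst x)" using h c by auto
  moreover have "\<not> is_cap (fst t)"
  proof -
    have "length c - 1 < length c" "c ! (length c - 1) = t" using c2 by (auto simp: nth_append)
    moreover have "odd (length c - 1)" using e ne by (cases "length c") auto
    ultimately show ?thesis using h by auto
  qed
  moreover have "okmid mid" unfolding okmid_def
  proof (intro conjI allI impI)
    show "even (length mid)" using e c2 by simp
  next
    fix i assume i: "i < length mid"
    then have "Suc i < length c" "c ! Suc i = mid ! i" using c2 by (auto simp: nth_append)
    then show "is_cap (fst (mid ! i)) = odd i" using h by auto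
  qed
  ultimately show ?thesis using c2 by blast
qed

lemma main_struct:
  assumes h: "\<forall>i<length c. is_cap (fst (c ! i)) = even i" and e: "even (length c)" and ne: "c \<noteq> []"
    and Tc: "tT c = 2 \<or> tT c = -2"
  shows "\<exists>g. unknot_diagram g \<and> writhe g = tW c \<and> (\<exists>p\<in>points g. cyc_eq (ccc_from g p) (U c))"
proof -
  obtain x mid t where d: "c = x # mid @ [t]" "is_cap (fst x)" "\<not> is_cap (fst t)" "okmid mid"
    using decomp[OF h e ne] by blast
  show ?thesis by (rule main_cap[OF d Tc])
qed

theorem mainTheorem4:
  fixes c :: "(gen \<times> int) list"
  assumes "alternating c"
    and "tT c = 2 \<or> tT c = -2"
  shows "\<exists>g. unknot_diagram g \<and> writhe g = tW c \<and>
           (\<exists>p \<in> points g. cyc_eq (ccc_from g p) (U c))"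
proof -
  have ne: "c \<noteq> []" using assms(2) by (auto simp: tT_def)
  have e: "even (length c)" by (rule alt_even[OF assms(1) ne])
  show ?thesis
  proof (cases "is_cap (fst (c ! 0))")
    case True
    then have "\<forall>i<length c. is_cap (fst (c ! i)) = even i" using alt_par[OF assms(1)] by auto
    then show ?thesis using main_struct e ne assms(2) by blast
  next
    case False
    obtain y ys where c: "c = y # ys" using ne by (cases c) auto
    let ?c = "ys @ [y]"
    have h: "\<forall>i<length ?c. is_cap (fst (?c ! i)) = even i"
    proof (intro allI impI)
      fix i assume i: "i < length ?c"
      show "is_cap (fst (?c ! i)) = even i"
      proof (cases "i < length ys")
        case True
        then have "?c ! i = c ! Suc i" "Suc i < length c" using c by (auto simp: nth_append)
        then show ?thesis using alt_par[OF assms(1)] False by auto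
      next
        case F2: False
        then have "i = length ys" using i by simp
        then have "?c ! i = c ! 0" "odd i" using c e by auto
        then show ?thesis using False by simp
      qed
    qed
    have e2: "even (length ?c)" using e c by simp
    have T2: "tT ?c = 2 \<or> tT ?c = -2" using assms(2) c by (simp add: tT_simps add.commute)
    from main_struct[OF h e2 _ T2] obtain g where g: "unknot_diagram g" "writhe g = tW ?c"
      "\<exists>p\<in>points g. cyc_eq (ccc_from g p) (U ?c)" by auto
    have "tW ?c = tW c" using c by (simp add: tW_simps)
    moreover have "U ?c = rotate 1 (U c)" using c by (simp add: U_def)
    moreover obtain p where p: "p \<in> points g" "cyc_eq (ccc_from g p) (U ?c)" using g(3) by blast
    ultimately have "cyc_eq (ccc_from g p) (U c)" using cyc_eq_rot by simp
    then show ?thesis using g(1) g(2) p(1) \<open>tW ?c = tW c\<close> by auto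
  qed
qed

end
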